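(* Let $\varphi\colon\mathcal{M}\to\mathcal{X}\subseteq\mathcal{E}$ be a smooth lift, where $\mathcal{M}$ is a smooth embedded submanifold of $\mathcal{E}'=\mathcal{E}_1\times\cdots\times\mathcal{E}_d$ (a product of Euclidean spaces) and $\varphi$ is defined on all of $\mathcal{E}'$ and is multilinear in its $d$ arguments. If $\mathcal{M}$ contains a point $(y_1,\dots,y_d)$ with $y_i=0$ for (at least) three indices $i$, and $0=\varphi(y_1,\dots,y_d)$ is not an isolated point of $\mathcal{X}$, then $\varphi$ does not satisfy "2 $\Rightarrow$ 1" at $(y_1,\dots,y_d)$.
   Context: $\mathcal{E}$ and $\mathcal{E}_i$ are finite-dimensional real inner product spaces; $\mathcal{X}=\varphi(\mathcal{M})$. Tangent cone $\mathrm{T}_x\mathcal{X}=\{\lim(x_i-x)/\tau_i: x_i\in\mathcal{X},\tau_i>0,\tau_i\to0\}$; $x$ is stationary for $f$ on $\mathcal{X}$ if $\langle\nabla f(x),v\rangle\ge0$ for all $v\in\mathrm{T}_x\mathcal{X}$. For $g=f\circ\varphi$, $y$ is 2-critical if $(g\circ c)'(0)=0$ and $(g\circ c)''(0)\ge0$ for all smooth curves $c$ in $\mathcal{M}$ with $c(0)=y$. "2 $\Rightarrow$ 1" at $y$: for every twice differentiable $f\colon\mathcal{E}\to\mathbb{R}$, if $y$ is 2-critical for $f\circ\varphi$ then $\varphi(y)$ is stationary for $f$ on $\mathcal{X}$. *)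

theory Defs
  imports "HOL-Analysis.Analysis"
begin

fun pdiff :: "'a::euclidean_space list \<Rightarrow> ('a \<Rightarrow> 'b::real_normed_vector) \<Rightarrow> 'a \<Rightarrow> 'b" where
  "pdiff [] f = f"
| "pdiff (v # vs) f = (\<lambda>x. vector_derivative (\<lambda>t. pdiff vs f (x + t *\<^sub>R v)) (at 0))"

definition smooth_on :: "'a::euclidean_space set \<Rightarrow> ('a \<Rightarrow> 'b::real_normed_vector) \<Rightarrow> bool" where
  "smooth_on U f \<longleftrightarrow> open U \<and>
     (\<forall>vs. set vs \<subseteq> Basis \<longrightarrow>
        continuous_on U (pdiff vs f) \<and>
        (\<forall>x\<in>U. \<forall>v\<in>Basis.
           ((\<lambda>t. pdiff vs f (x + t *\<^sub>R v)) has_vector_derivative pdiff (v # vs) f x) (at 0)))"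

definition grad :: "('a::euclidean_space \<Rightarrow> real) \<Rightarrow> 'a \<Rightarrow> 'a" where
  "grad f x = (\<Sum>b\<in>Basis. frechet_derivative f (at x) b *\<^sub>R b)"

definition embedded_submanifold :: "'a::euclidean_space set \<Rightarrow> bool" where
  "embedded_submanifold M \<longleftrightarrow>
     (\<forall>y\<in>M. \<exists>U k h. open U \<and> y \<in> U \<and>
        (\<forall>j<k. smooth_on U (h j :: 'a \<Rightarrow> real)) \<and>
        (\<forall>x\<in>U. \<forall>c::nat \<Rightarrow> real. (\<Sum>j<k. c j *\<^sub>R grad (h j) x) = 0 \<longrightarrow> (\<forall>j<k. c j = 0)) \<and>
        M \<inter> U = {x\<in>U. \<forall>j<k. h j x = 0})"

text \<open>E' is modelled as a Euclidean space whose orthonormal basis is partitioned into d blocks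
  B 0, ..., B (d-1); the i-th factor E_i is the span of B i, and blk B i x is the i-th
  component of x.\<close>
definition block_structure :: "nat \<Rightarrow> (nat \<Rightarrow> 'a::euclidean_space set) \<Rightarrow> bool" where
  "block_structure d B \<longleftrightarrow> (\<forall>i<d. B i \<subseteq> Basis) \<and>
     (\<forall>i<d. \<forall>j<d. i \<noteq> j \<longrightarrow> B i \<inter> B j = {}) \<and> (\<Union>i<d. B i) = Basis"

definition blk :: "(nat \<Rightarrow> 'a::euclidean_space set) \<Rightarrow> nat \<Rightarrow> 'a \<Rightarrow> 'a" where
  "blk B i x = (\<Sum>b\<in>B i. (x \<bullet> b) *\<^sub>R b)"

definition multilinear :: "nat \<Rightarrow> (nat \<Rightarrow> 'a::euclidean_space set) \<Rightarrow> ('a \<Rightarrow> 'e::real_vector) \<Rightarrow> bool" where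
  "multilinear d B \<phi> \<longleftrightarrow> (\<forall>i<d. \<forall>x. linear (\<lambda>v. \<phi> (x - blk B i x + blk B i v)))"

definition tangent_cone :: "'e::real_normed_vector set \<Rightarrow> 'e \<Rightarrow> 'e set" where
  "tangent_cone X x = {v. \<exists>xs \<tau>. (\<forall>i. xs i \<in> X) \<and> (\<forall>i. \<tau> i > (0::real)) \<and> \<tau> \<longlonglongrightarrow> 0 \<and>
                          (\<lambda>i. (xs i - x) /\<^sub>R \<tau> i) \<longlonglongrightarrow> v}"

definition stationary_on :: "('e::euclidean_space \<Rightarrow> real) \<Rightarrow> 'e set \<Rightarrow> 'e \<Rightarrow> bool" where
  "stationary_on f X x \<longleftrightarrow> (\<forall>v\<in>tangent_cone X x. grad f x \<bullet> v \<ge> 0)"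

definition twice_differentiable :: "('e::euclidean_space \<Rightarrow> real) \<Rightarrow> bool" where
  "twice_differentiable f \<longleftrightarrow> (\<forall>x. f differentiable at x) \<and> (\<forall>x. grad f differentiable at x)"

definition two_critical :: "('a::euclidean_space \<Rightarrow> real) \<Rightarrow> 'a set \<Rightarrow> 'a \<Rightarrow> bool" where
  "two_critical g M y \<longleftrightarrow>
     (\<forall>c a b. a < 0 \<and> 0 < b \<and> smooth_on {a<..<b} (c :: real \<Rightarrow> 'a) \<and> c ` {a<..<b} \<subseteq> M \<and> c 0 = y
        \<longrightarrow> deriv (g \<circ> c) 0 = 0 \<and> deriv (deriv (g \<circ> c)) 0 \<ge> 0)"

definition two_implies_one :: "('a::euclidean_space \<Rightarrow> 'e::euclidean_space) \<Rightarrow> 'a set \<Rightarrow> 'a \<Rightarrow> bool" where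
  "two_implies_one \<phi> M y \<longleftrightarrow>
     (\<forall>f :: 'e \<Rightarrow> real. twice_differentiable f \<longrightarrow> two_critical (f \<circ> \<phi>) M y
        \<longrightarrow> stationary_on f (\<phi> ` M) (\<phi> y))"

end

theory Submission
  imports Defs
begin


lemma blk_inner:
  assumes "B i \<subseteq> Basis" "b \<in> Basis"
  shows "blk B i z \<bullet> b = (if b \<in> B i then z \<bullet> b else 0)"
proof -
  have fin: "finite (B i)" using assms(1) finite_subset finite_Basis by blast
  have "blk B i z \<bullet> b = (\<Sum>b'\<in>B i. (z \<bullet> b') * (b' \<bullet> b))"
    unfolding blk_def by (simp add: inner_sum_left)
  also have "\<dots> = (\<Sum>b'\<in>B i. if b' = b then z \<bullet> b else 0)"
    by (rule sum.cong) (use assms in \<open>auto simp: inner_Basis\<close>)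
  also have "\<dots> = (if b \<in> B i then z \<bullet> b else 0)"
    using fin by (simp add: sum.delta')
  finally show ?thesis .
qed

lemma linear_blk: "linear (blk B i)"
  unfolding blk_def linear_iff by (simp add: inner_add_left scaleR_add_left sum.distrib scaleR_sum_right)

lemma blk_basis:
  assumes "B i \<subseteq> Basis" "b \<in> Basis"
  shows "blk B i b = (if b \<in> B i then b else 0)"
  by (rule euclidean_eqI) (use assms in \<open>auto simp: blk_inner inner_Basis\<close>)

lemma expand:
  assumes BI: "B i \<subseteq> Basis" and L: "linear (\<lambda>v. \<phi> (u - blk B i u + blk B i v))"
  shows "\<phi> u = (\<Sum>b1\<in>B i. (u \<bullet> b1) *\<^sub>R \<phi> (u - blk B i u + b1))"
proof -
  define L where "L = (\<lambda>v. \<phi> (u - blk B i u + blk B i v))"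
  have lin: "linear L" using L unfolding L_def .
  have "\<phi> u = L u" unfolding L_def by simp
  also have "\<dots> = L (\<Sum>b\<in>Basis. (u \<bullet> b) *\<^sub>R b)" by (simp add: euclidean_representation)
  also have "\<dots> = (\<Sum>b\<in>Basis. (u \<bullet> b) *\<^sub>R L b)"
    using lin by (simp add: linear_sum linear_cmul)
  also have "\<dots> = (\<Sum>b\<in>B i. (u \<bullet> b) *\<^sub>R L b) + (\<Sum>b\<in>Basis - B i. (u \<bullet> b) *\<^sub>R L b)"
    using BI by (metis (no_types, lifting) finite_Basis sum.subset_diff add.commute)
  also have "(\<Sum>b\<in>Basis - B i. (u \<bullet> b) *\<^sub>R L b) = 0"
  proof (rule sum.neutral, clarify)
    fix b assume b: "b \<in> Basis" "b \<notin> B i"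
    have "L b = L 0" unfolding L_def using b BI by (simp add: blk_basis linear_0[OF linear_blk])
    also have "\<dots> = 0" using lin by (simp add: linear_0)
    finally show "(u \<bullet> b) *\<^sub>R L b = 0" by simp
  qed
  also have "(\<Sum>b\<in>B i. (u \<bullet> b) *\<^sub>R L b) = (\<Sum>b1\<in>B i. (u \<bullet> b1) *\<^sub>R \<phi> (u - blk B i u + b1))"
    by (rule sum.cong) (use BI blk_basis[of B i] in \<open>auto simp: L_def\<close>)
  finally show ?thesis by simp
qed

lemma shift:
  assumes BJ: "B j \<subseteq> Basis" and b: "b \<in> B j" and L: "linear (\<lambda>v. \<phi> (z - blk B j z + blk B j v))"
  shows "\<phi> (z + s *\<^sub>R b) = \<phi> z + s *\<^sub>R \<phi> (z - blk B j z + b)"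
proof -
  define L where "L = (\<lambda>v. \<phi> (z - blk B j z + blk B j v))"
  have lin: "linear L" using L unfolding L_def .
  have bb: "blk B j b = b" using BJ b blk_basis[of B j b] by auto
  have "\<phi> (z + s *\<^sub>R b) = L (z + s *\<^sub>R b)"
    unfolding L_def using bb by (simp add: linear_add[OF linear_blk] linear_cmul[OF linear_blk])
  also have "\<dots> = L z + s *\<^sub>R L b" using lin by (simp add: linear_add linear_cmul)
  also have "\<dots> = \<phi> z + s *\<^sub>R \<phi> (z - blk B j z + b)" unfolding L_def using bb by simp
  finally show ?thesis .
qed

lemma deriv_null:
  assumes "continuous (at x) g" "g x = 0"
  shows "((\<lambda>w. ((w - x) \<bullet> b) *\<^sub>R g w) has_derivative (\<lambda>w. 0)) (at x)"
  unfolding has_derivative_iff_norm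
proof (intro conjI)
  show "bounded_linear (\<lambda>w. 0::'b)" by simp
  have g0: "((\<lambda>w. norm b * norm (g w)) \<longlongrightarrow> 0) (at x)"
    using assms by (auto intro!: tendsto_eq_intros simp: continuous_at)
  show "((\<lambda>y. norm (((y - x) \<bullet> b) *\<^sub>R g y - ((x - x) \<bullet> b) *\<^sub>R g x - 0) / norm (y - x)) \<longlongrightarrow> 0) (at x)"
  proof (rule Lim_null_comparison[OF _ g0], rule always_eventually, rule allI)
    fix y
    have "norm (((y - x) \<bullet> b) *\<^sub>R g y) \<le> norm (y - x) * norm b * norm (g y)"
      by (simp add: mult_right_mono Cauchy_Schwarz_ineq2)
    then show "norm (norm (((y - x) \<bullet> b) *\<^sub>R g y - ((x - x) \<bullet> b) *\<^sub>R g x - 0) / norm (y - x)) \<le> norm b * norm (g y)"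
      by (cases "y = x") (auto simp: divide_le_eq mult_ac)
  qed
qed



lemma phi_deriv:
  fixes \<phi> :: "'p::euclidean_space \<Rightarrow> 'e::real_normed_vector"
  assumes sh: "\<And>b z s. b \<in> Basis \<Longrightarrow> \<phi> (z + s *\<^sub>R b) = \<phi> z + s *\<^sub>R \<psi> b z"
    and cont: "\<And>b. b \<in> Basis \<Longrightarrow> continuous_on UNIV (\<psi> b)"
  shows "(\<phi> has_derivative (\<lambda>w. \<Sum>b\<in>Basis. (w \<bullet> b) *\<^sub>R \<psi> b x)) (at x)"
proof -
  have main: "finite S \<Longrightarrow> S \<subseteq> Basis \<Longrightarrow>
     ((\<lambda>w. \<phi> (x + (\<Sum>b\<in>S. ((w - x) \<bullet> b) *\<^sub>R b))) has_derivative (\<lambda>w. \<Sum>b\<in>S. (w \<bullet> b) *\<^sub>R \<psi> b x)) (at x)" for S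
  proof (induction S rule: finite_induct)
    case empty
    then show ?case by simp
  next
    case (insert b S)
    define P where "P = (\<lambda>w. x + (\<Sum>b\<in>S. ((w - x) \<bullet> b) *\<^sub>R b))"
    have b: "b \<in> Basis" using insert by auto
    have eq: "\<phi> (x + (\<Sum>b\<in>insert b S. ((w - x) \<bullet> b) *\<^sub>R b)) =
        \<phi> (P w) + ((w - x) \<bullet> b) *\<^sub>R \<psi> b x + ((w - x) \<bullet> b) *\<^sub>R (\<psi> b (P w) - \<psi> b x)" for w
    proof -
      have "x + (\<Sum>b\<in>insert b S. ((w - x) \<bullet> b) *\<^sub>R b) = P w + ((w - x) \<bullet> b) *\<^sub>R b"
        using insert unfolding P_def by (simp add: algebra_simps)
      then have "\<phi> (x + (\<Sum>b\<in>insert b S. ((w - x) \<bullet> b) *\<^sub>R b)) = \<phi> (P w) + ((w - x) \<bullet> b) *\<^sub>R \<psi> b (P w)"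
        using sh[OF b, of "P w" "(w - x) \<bullet> b"] by simp
      then show ?thesis by (simp add: scaleR_diff_right)
    qed
    have cP: "continuous (at x) P" unfolding P_def by (intro continuous_intros)
    have cg: "continuous (at x) (\<lambda>w. \<psi> b (P w) - \<psi> b x)"
      using cont[OF b] cP
      by (intro continuous_intros) (metis continuous_on_eq_continuous_at open_UNIV UNIV_I isCont_o2)
    have g0: "\<psi> b (P x) - \<psi> b x = 0" unfolding P_def by simp
    have d1: "((\<lambda>w. \<phi> (P w)) has_derivative (\<lambda>w. \<Sum>b\<in>S. (w \<bullet> b) *\<^sub>R \<psi> b x)) (at x)"
      using insert unfolding P_def by auto
    have d2: "((\<lambda>w. ((w - x) \<bullet> b) *\<^sub>R \<psi> b x) has_derivative (\<lambda>w. (w \<bullet> b) *\<^sub>R \<psi> b x)) (at x)"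
      by (auto intro!: derivative_eq_intros)
    note d3 = deriv_null[OF cg g0, of b]
    have "((\<lambda>w. \<phi> (P w) + ((w - x) \<bullet> b) *\<^sub>R \<psi> b x + ((w - x) \<bullet> b) *\<^sub>R (\<psi> b (P w) - \<psi> b x))
       has_derivative (\<lambda>w. (\<Sum>b\<in>S. (w \<bullet> b) *\<^sub>R \<psi> b x) + (w \<bullet> b) *\<^sub>R \<psi> b x + 0)) (at x)"
      by (intro has_derivative_add d1 d2 d3)
    moreover have "(\<lambda>w. \<phi> (x + (\<Sum>b\<in>insert b S. ((w - x) \<bullet> b) *\<^sub>R b))) = (\<lambda>w. \<phi> (P w) + ((w - x) \<bullet> b) *\<^sub>R \<psi> b x + ((w - x) \<bullet> b) *\<^sub>R (\<psi> b (P w) - \<psi> b x))"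
      by (rule ext) (rule eq)
    moreover have "(\<lambda>w. \<Sum>b\<in>insert b S. (w \<bullet> b) *\<^sub>R \<psi> b x) = (\<lambda>w. (\<Sum>b\<in>S. (w \<bullet> b) *\<^sub>R \<psi> b x) + (w \<bullet> b) *\<^sub>R \<psi> b x + 0)"
      using insert by (auto simp: add.commute)
    ultimately show ?case by simp
  qed
  have "((\<lambda>w. \<phi> (x + (\<Sum>b\<in>Basis. ((w - x) \<bullet> b) *\<^sub>R b))) has_derivative (\<lambda>w. \<Sum>b\<in>Basis. (w \<bullet> b) *\<^sub>R \<psi> b x)) (at x)"
    by (rule main) auto
  then show ?thesis by (simp add: euclidean_representation)
qed


lemma tangent_nonzero:
  fixes X :: "'e::euclidean_space set"
  assumes "0 islimpt X"
  shows "\<exists>v. v \<noteq> 0 \<and> v \<in> tangent_cone X 0"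
proof -
  obtain f where f: "\<And>n. f n \<in> X - {0}" "f \<longlonglongrightarrow> 0"
    using assms unfolding islimpt_sequential by blast
  define u where "u n = f n /\<^sub>R norm (f n)" for n
  have "\<forall>n. u n \<in> sphere 0 1" using f(1) by (auto simp: u_def)
  then obtain l r where l: "l \<in> sphere (0::'e) 1" "strict_mono r" "(u \<circ> r) \<longlonglongrightarrow> l"
    using compact_imp_seq_compact[OF compact_sphere] unfolding seq_compact_def by metis
  have "l \<in> tangent_cone X 0"
    unfolding tangent_cone_def
  proof (intro CollectI exI conjI allI)
    show "(f \<circ> r) n \<in> X" for n using f(1) by auto
    show "norm (f (r n)) > 0" for n using f(1) by auto
    show "(\<lambda>n. norm (f (r n))) \<longlonglongrightarrow> 0"
      using LIMSEQ_subseq_LIMSEQ[OF f(2) l(2)] tendsto_norm_zero by (auto simp: o_def)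
    show "(\<lambda>i. ((f \<circ> r) i - 0) /\<^sub>R norm (f (r i))) \<longlonglongrightarrow> l"
      using l(3) by (simp add: u_def o_def)
  qed
  moreover have "l \<noteq> 0" using l(1) by auto
  ultimately show ?thesis by blast
qed

lemma curve_part:
  fixes \<phi> :: "'p::euclidean_space \<Rightarrow> 'e::euclidean_space" and c :: "real \<Rightarrow> 'p"
  assumes D\<phi>: "\<And>x. (\<phi> has_derivative (\<lambda>w. \<Sum>b\<in>Basis. (w \<bullet> b) *\<^sub>R \<psi> b x)) (at x)"
    and psi0: "\<And>bb. bb \<in> Basis \<Longrightarrow> \<psi> bb y = 0"
    and psilim: "\<And>bb c c0'. bb \<in> Basis \<Longrightarrow> (c has_vector_derivative c0') (at 0) \<Longrightarrow> c 0 = y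
        \<Longrightarrow> ((\<lambda>t. \<psi> bb (c t) /\<^sub>R t) \<longlongrightarrow> 0) (at 0)"
    and sm: "smooth_on {a<..<b} c" and ab: "a < 0" "0 < b" and c0: "c 0 = y"
  shows "deriv (((\<lambda>x. - (v \<bullet> x)) \<circ> \<phi>) \<circ> c) 0 = 0 \<and> deriv (deriv (((\<lambda>x. - (v \<bullet> x)) \<circ> \<phi>) \<circ> c)) 0 = 0"
proof -
  define S where "S = {a<..<b}"
  have S: "open S" "0 \<in> S" using ab by (auto simp: S_def)
  define c' where "c' t = pdiff [1] c t" for t
  have A: "continuous_on S (pdiff vs c) \<and> (\<forall>x\<in>S. \<forall>v\<in>Basis.
        ((\<lambda>t. pdiff vs c (x + t *\<^sub>R v)) has_vector_derivative pdiff (v # vs) c x) (at 0))"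
    if "set vs \<subseteq> Basis" for vs
    using sm that unfolding smooth_on_def S_def by blast
  have dc: "(c has_vector_derivative c' t) (at t)" if t: "t \<in> S" for t
  proof -
    have "((\<lambda>s. c (t + s *\<^sub>R 1)) has_vector_derivative c' t) (at 0)"
      using A[of "[]"] t unfolding c'_def by simp
    then have g: "((\<lambda>s. c (t + s)) has_vector_derivative c' t) (at ((\<lambda>s. s - t) t))" by simp
    have "((\<lambda>s. s - t) has_vector_derivative 1) (at t)"
      by (auto intro!: derivative_eq_intros simp: has_real_derivative_iff_has_vector_derivative[symmetric])
    from vector_diff_chain_at[OF this g] show ?thesis by (simp add: o_def)
  qed
  have cc': "continuous (at 0) c'"
  proof -
    have "continuous_on S c'"
      using A[of "[1]"] unfolding c'_def by simp
    then show ?thesis using S continuous_on_eq_continuous_at by blast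
  qed
  define h' where "h' t = (\<Sum>bb\<in>Basis. (c' t \<bullet> bb) *\<^sub>R \<psi> bb (c t))" for t
  define D where "D t = - (v \<bullet> h' t)" for t
  define G where "G = ((\<lambda>x. - (v \<bullet> x)) \<circ> \<phi>) \<circ> c"
  have dh: "((\<lambda>t. \<phi> (c t)) has_vector_derivative h' t) (at t)" if t: "t \<in> S" for t
  proof -
    have "(\<phi> has_derivative (\<lambda>w. \<Sum>b\<in>Basis. (w \<bullet> b) *\<^sub>R \<psi> b (c t))) (at (c t) within c ` UNIV)"
      using D\<phi> has_derivative_at_withinI by blast
    moreover have "(c has_vector_derivative c' t) (at t within UNIV)" using dc[OF t] by simp
    ultimately have "((\<phi> \<circ> c) has_vector_derivative (\<Sum>b\<in>Basis. (c' t \<bullet> b) *\<^sub>R \<psi> b (c t))) (at t within UNIV)"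
      using vector_derivative_diff_chain_within by blast
    then show ?thesis by (simp add: o_def h'_def)
  qed
  have bl: "bounded_linear (\<lambda>x::'e. - (v \<bullet> x))"
    by (intro bounded_linear_minus bounded_linear_inner_right)
  have dG: "(G has_real_derivative D t) (at t)" if t: "t \<in> S" for t
    using bounded_linear.has_vector_derivative[OF bl dh[OF t]]
    by (simp add: G_def D_def o_def has_real_derivative_iff_has_vector_derivative)
  have eqd: "deriv G t = D t" if "t \<in> S" for t using dG[OF that] by (rule DERIV_imp_deriv)
  have D0: "D 0 = 0" by (simp add: D_def h'_def c0 psi0)
  have lim: "((\<lambda>t. h' t /\<^sub>R t) \<longlongrightarrow> 0) (at 0)"
  proof -
    have "((\<lambda>t. \<Sum>bb\<in>Basis. (c' t \<bullet> bb) *\<^sub>R (\<psi> bb (c t) /\<^sub>R t)) \<longlongrightarrow> (\<Sum>bb\<in>Basis. (c' 0 \<bullet> bb) *\<^sub>R 0)) (at 0)"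
    proof (intro tendsto_sum tendsto_scaleR tendsto_inner tendsto_const)
      fix bb :: 'p assume bb: "bb \<in> Basis"
      show "(c' \<longlongrightarrow> c' 0) (at 0)" using cc' by (simp add: continuous_at)
      show "((\<lambda>t. \<psi> bb (c t) /\<^sub>R t) \<longlongrightarrow> 0) (at 0)"
        by (rule psilim[OF bb dc[OF S(2)] c0])
    qed
    moreover have "(\<lambda>t. \<Sum>bb\<in>Basis. (c' t \<bullet> bb) *\<^sub>R (\<psi> bb (c t) /\<^sub>R t)) = (\<lambda>t. h' t /\<^sub>R t)"
      by (auto simp: h'_def scaleR_sum_right mult.commute)
    ultimately show ?thesis by simp
  qed
  have "((\<lambda>t. (D (0 + t) - D 0) / t) \<longlongrightarrow> 0) (at 0)"
  proof -
    have "((\<lambda>t. - (v \<bullet> (h' t /\<^sub>R t))) \<longlongrightarrow> - (v \<bullet> 0)) (at 0)"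
      by (intro tendsto_intros lim)
    moreover have "(\<lambda>t. - (v \<bullet> (h' t /\<^sub>R t))) = (\<lambda>t. (D (0 + t) - D 0) / t)"
      using D0 by (auto simp: D_def divide_inverse mult.commute)
    ultimately show ?thesis by simp
  qed
  then have "(D has_real_derivative 0) (at 0)" by (simp add: DERIV_def)
  then have "(deriv G has_real_derivative 0) (at 0)"
    by (rule has_field_derivative_transform_within_open[OF _ S]) (simp add: eqd)
  then have "deriv (deriv G) 0 = 0" by (rule DERIV_imp_deriv)
  moreover have "deriv G 0 = 0" using eqd[OF S(2)] D0 by simp
  ultimately show ?thesis by (simp add: G_def)
qed



definition W3 :: "(nat \<Rightarrow> 'a::euclidean_space set) \<Rightarrow> nat \<Rightarrow> nat \<Rightarrow> nat \<Rightarrow> 'a \<Rightarrow> 'a \<Rightarrow> 'a \<Rightarrow> 'a \<Rightarrow> 'a" where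
  "W3 B j i k bb z b1 b2 = (let z1 = z - blk B j z + bb; z2 = z1 - blk B i z1 + b1 in z2 - blk B k z2 + b2)"

lemma inner_repl:
  assumes "B p \<subseteq> Basis" "B q \<subseteq> Basis" "B p \<inter> B q = {}" "e \<in> B p" "b \<in> B q"
  shows "(u - blk B p u + e) \<bullet> b = u \<bullet> b"
proof -
  have b: "b \<in> Basis" "b \<notin> B p" using assms by auto
  have "e \<noteq> b" using assms by auto
  moreover have "e \<in> Basis" "b \<in> Basis" using assms by auto
  ultimately have "e \<bullet> b = 0" by (simp add: inner_Basis)
  then show ?thesis using b assms(1) by (simp add: inner_diff_left inner_add_left blk_inner)
qed

lemma psi_expand:
  assumes Bs: "B i \<subseteq> Basis" "B j \<subseteq> Basis" "B k \<subseteq> Basis"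
    and dj: "B i \<inter> B j = {}" "B k \<inter> B j = {}" "B i \<inter> B k = {}"
    and lini: "\<And>x. linear (\<lambda>v. \<phi> (x - blk B i x + blk B i v))"
    and link: "\<And>x. linear (\<lambda>v. \<phi> (x - blk B k x + blk B k v))"
    and bb: "bb \<in> B j"
  shows "\<phi> (z - blk B j z + bb) = (\<Sum>b1\<in>B i. \<Sum>b2\<in>B k. ((z \<bullet> b1) * (z \<bullet> b2)) *\<^sub>R \<phi> (W3 B j i k bb z b1 b2))"
proof -
  define z1 where "z1 = z - blk B j z + bb"
  have "\<phi> z1 = (\<Sum>b1\<in>B i. (z1 \<bullet> b1) *\<^sub>R \<phi> (z1 - blk B i z1 + b1))"
    by (rule expand[OF Bs(1) lini])
  also have "\<dots> = (\<Sum>b1\<in>B i. (z1 \<bullet> b1) *\<^sub>R (\<Sum>b2\<in>B k. ((z1 - blk B i z1 + b1) \<bullet> b2) *\<^sub>R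
      \<phi> ((z1 - blk B i z1 + b1) - blk B k (z1 - blk B i z1 + b1) + b2)))"
    by (rule sum.cong[OF refl], subst expand[OF Bs(3) link], rule refl)
  also have "\<dots> = (\<Sum>b1\<in>B i. \<Sum>b2\<in>B k. ((z \<bullet> b1) * (z \<bullet> b2)) *\<^sub>R \<phi> (W3 B j i k bb z b1 b2))"
  proof (rule sum.cong[OF refl])
    fix b1 assume b1: "b1 \<in> B i"
    have e1: "z1 \<bullet> b1 = z \<bullet> b1" unfolding z1_def
      using inner_repl[OF Bs(2) Bs(1) _ bb b1] dj by (auto simp: Int_commute)
    have e2: "(z1 - blk B i z1 + b1) \<bullet> b2 = z \<bullet> b2" if b2: "b2 \<in> B k" for b2
    proof -
      have "(z1 - blk B i z1 + b1) \<bullet> b2 = z1 \<bullet> b2"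
        using inner_repl[OF Bs(1) Bs(3) dj(3) b1 b2] .
      also have "\<dots> = z \<bullet> b2" unfolding z1_def
        using inner_repl[OF Bs(2) Bs(3) _ bb b2] dj by (auto simp: Int_commute)
      finally show ?thesis .
    qed
    show "(z1 \<bullet> b1) *\<^sub>R (\<Sum>b2\<in>B k. ((z1 - blk B i z1 + b1) \<bullet> b2) *\<^sub>R
      \<phi> ((z1 - blk B i z1 + b1) - blk B k (z1 - blk B i z1 + b1) + b2)) =
      (\<Sum>b2\<in>B k. ((z \<bullet> b1) * (z \<bullet> b2)) *\<^sub>R \<phi> (W3 B j i k bb z b1 b2))"
      unfolding scaleR_sum_right e1
      by (rule sum.cong[OF refl]) (simp add: e2 W3_def Let_def z1_def[symmetric])
  qed
  finally show ?thesis unfolding z1_def .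
qed

lemma tendsto_blk[tendsto_intros]: "(f \<longlongrightarrow> l) F \<Longrightarrow> ((\<lambda>x. blk B i (f x)) \<longlongrightarrow> blk B i l) F"
  using linear_blk[of B i] linear_conv_bounded_linear bounded_linear.tendsto by blast

lemma psi_lim:
  fixes \<phi> :: "'a::euclidean_space \<Rightarrow> 'e::real_normed_vector" and c :: "real \<Rightarrow> 'a"
  assumes Bs: "B i \<subseteq> Basis" "B j \<subseteq> Basis" "B k \<subseteq> Basis"
    and dj: "B i \<inter> B j = {}" "B k \<inter> B j = {}" "B i \<inter> B k = {}"
    and lini: "\<And>x. linear (\<lambda>v. \<phi> (x - blk B i x + blk B i v))"
    and link: "\<And>x. linear (\<lambda>v. \<phi> (x - blk B k x + blk B k v))"
    and bb: "bb \<in> B j"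
    and cphi: "continuous_on UNIV \<phi>"
    and yi: "\<And>b. b \<in> B i \<Longrightarrow> y \<bullet> b = 0" and yk: "\<And>b. b \<in> B k \<Longrightarrow> y \<bullet> b = 0"
    and dc: "(c has_vector_derivative c0') (at 0)" and c0: "c 0 = y"
  shows "((\<lambda>t. \<phi> (c t - blk B j (c t) + bb) /\<^sub>R t) \<longlongrightarrow> 0) (at 0)"
proof -
  have fin: "finite (B i)" "finite (B k)" using Bs finite_subset finite_Basis by blast+
  have cc: "(c \<longlongrightarrow> y) (at 0)"
    using has_vector_derivative_continuous[OF dc] c0 by (simp add: continuous_at)
  have q1: "((\<lambda>t. (c t \<bullet> b1) / t) \<longlongrightarrow> c0' \<bullet> b1) (at 0)" if b1: "b1 \<in> B i" for b1
  proof -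
    have "((\<lambda>t. c t \<bullet> b1) has_vector_derivative (c0' \<bullet> b1)) (at 0)"
      using bounded_linear.has_vector_derivative[OF bounded_linear_inner_left dc] .
    then have "((\<lambda>t. c t \<bullet> b1) has_real_derivative (c0' \<bullet> b1)) (at 0)"
      by (simp add: has_real_derivative_iff_has_vector_derivative)
    then show ?thesis using yi[OF b1] c0 by (simp add: DERIV_def)
  qed
  have q3: "((\<lambda>t. \<phi> (W3 B j i k bb (c t) b1 b2)) \<longlongrightarrow> \<phi> (W3 B j i k bb y b1 b2)) (at 0)" for b1 b2
  proof -
    have "((\<lambda>t. W3 B j i k bb (c t) b1 b2) \<longlongrightarrow> W3 B j i k bb y b1 b2) (at 0)"
      unfolding W3_def Let_def by (intro tendsto_intros cc)
    moreover have "isCont \<phi> (W3 B j i k bb y b1 b2)"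
      using cphi continuous_on_eq_continuous_at open_UNIV by blast
    ultimately show ?thesis using isCont_tendsto_compose by blast
  qed
  have "((\<lambda>t. \<Sum>b1\<in>B i. \<Sum>b2\<in>B k. (((c t \<bullet> b1) / t) * (c t \<bullet> b2)) *\<^sub>R \<phi> (W3 B j i k bb (c t) b1 b2))
     \<longlongrightarrow> (\<Sum>b1\<in>B i. \<Sum>b2\<in>B k. ((c0' \<bullet> b1) * (y \<bullet> b2)) *\<^sub>R \<phi> (W3 B j i k bb y b1 b2))) (at 0)"
  proof (intro tendsto_sum)
    fix b1 b2 assume b1: "b1 \<in> B i" and b2: "b2 \<in> B k"
    show "((\<lambda>t. (((c t \<bullet> b1) / t) * (c t \<bullet> b2)) *\<^sub>R \<phi> (W3 B j i k bb (c t) b1 b2))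
     \<longlongrightarrow> ((c0' \<bullet> b1) * (y \<bullet> b2)) *\<^sub>R \<phi> (W3 B j i k bb y b1 b2)) (at 0)"
      by (intro tendsto_scaleR tendsto_mult q1[OF b1] q3 tendsto_inner cc tendsto_const)
  qed
  moreover have "(\<Sum>b1\<in>B i. \<Sum>b2\<in>B k. ((c0' \<bullet> b1) * (y \<bullet> b2)) *\<^sub>R \<phi> (W3 B j i k bb y b1 b2)) = 0"
    using yk by simp
  moreover have "(\<lambda>t. \<Sum>b1\<in>B i. \<Sum>b2\<in>B k. (((c t \<bullet> b1) / t) * (c t \<bullet> b2)) *\<^sub>R \<phi> (W3 B j i k bb (c t) b1 b2))
      = (\<lambda>t. \<phi> (c t - blk B j (c t) + bb) /\<^sub>R t)"
  proof (rule ext)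
    fix t
    show "(\<Sum>b1\<in>B i. \<Sum>b2\<in>B k. (((c t \<bullet> b1) / t) * (c t \<bullet> b2)) *\<^sub>R \<phi> (W3 B j i k bb (c t) b1 b2))
      = \<phi> (c t - blk B j (c t) + bb) /\<^sub>R t"
      unfolding psi_expand[OF Bs dj lini link bb, of "c t"]
      by (simp add: scaleR_sum_right divide_inverse mult.commute mult.left_commute)
  qed
  ultimately show ?thesis by simp
qed



lemma two_others:
  assumes "finite I" "card I \<ge> 3"
  shows "\<exists>i k. i \<in> I \<and> k \<in> I \<and> i \<noteq> k \<and> i \<noteq> j \<and> k \<noteq> j"
proof -
  have c1: "card (I - {j}) \<ge> 2" using assms by (cases "j \<in> I") (auto simp: card_Diff_singleton)
  have "I - {j} \<noteq> {}" proof assume "I - {j} = {}" then show False using c1 by (metis card.empty not_numeral_le_zero) qed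
  then obtain i where i: "i \<in> I - {j}" by blast
  have c2: "card (I - {j} - {i}) \<ge> 1" using c1 i assms(1) by (simp add: card_Diff_singleton)
  have "I - {j} - {i} \<noteq> {}" proof assume "I - {j} - {i} = {}" then show False using c2 by (metis card.empty not_one_le_zero) qed
  then obtain k where k: "k \<in> I - {j} - {i}" by blast
  show ?thesis using i k by blast
qed

theorem proposition5p1:
  fixes \<phi> :: "'p::euclidean_space \<Rightarrow> 'e::euclidean_space"
    and M :: "'p set" and d :: nat and B :: "nat \<Rightarrow> 'p set" and y :: 'p
  assumes "block_structure d B"
    and "embedded_submanifold M"
    and "smooth_on UNIV \<phi>"
    and "multilinear d B \<phi>"
    and "y \<in> M"
    and "\<exists>I. I \<subseteq> {..<d} \<and> card I \<ge> 3 \<and> (\<forall>i\<in>I. blk B i y = 0)"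
    and "\<phi> y = 0"
    and "0 islimpt (\<phi> ` M)"
  shows "\<not> two_implies_one \<phi> M y"
proof -
  obtain I where I: "I \<subseteq> {..<d}" "card I \<ge> 3" "\<forall>i\<in>I. blk B i y = 0" using assms(6) by blast
  have finI: "finite I" using I(1) finite_subset by blast
  have Bsub: "\<And>i. i < d \<Longrightarrow> B i \<subseteq> Basis"
    and Bdj: "\<And>i j. i < d \<Longrightarrow> j < d \<Longrightarrow> i \<noteq> j \<Longrightarrow> B i \<inter> B j = {}"
    and Bun: "(\<Union>i<d. B i) = Basis" using assms(1) unfolding block_structure_def by auto
  define J where "J b = (SOME j. j < d \<and> b \<in> B j)" for b
  have J: "J b < d \<and> b \<in> B (J b)" if "b \<in> Basis" for b
    unfolding J_def by (rule someI_ex) (use that Bun in blast)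
  define \<psi> where "\<psi> b z = \<phi> (z - blk B (J b) z + b)" for b z
  have lin: "\<And>i x. i < d \<Longrightarrow> linear (\<lambda>v. \<phi> (x - blk B i x + blk B i v))"
    using assms(4) unfolding multilinear_def by blast
  have cphi: "continuous_on UNIV \<phi>"
    using conjunct2[OF assms(3)[unfolded smooth_on_def], rule_format, of "[]"] by simp
  have cblk: "continuous_on UNIV (blk B i)" for i
    using linear_continuous_on linear_conv_bounded_linear linear_blk by blast
  have cpsi: "continuous_on UNIV (\<psi> b)" for b
    unfolding \<psi>_def by (intro continuous_on_compose2[OF cphi] continuous_intros continuous_on_compose2[OF cblk]) auto
  have sh: "\<phi> (z + s *\<^sub>R b) = \<phi> z + s *\<^sub>R \<psi> b z" if b: "b \<in> Basis" for b z s
    unfolding \<psi>_def using shift[OF Bsub[OF J[OF b, THEN conjunct1]] J[OF b, THEN conjunct2] lin[OF J[OF b, THEN conjunct1]]] .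
  have D\<phi>: "(\<phi> has_derivative (\<lambda>w. \<Sum>b\<in>Basis. (w \<bullet> b) *\<^sub>R \<psi> b x)) (at x)" for x
    by (rule phi_deriv[OF sh cpsi])
  have yz: "y \<bullet> b = 0" if "i \<in> I" "b \<in> B i" for i b
  proof -
    have "i < d" using I(1) that by auto
    then have "blk B i y \<bullet> b = y \<bullet> b" using blk_inner[of B i b y, OF Bsub[OF \<open>i < d\<close>]] that Bsub by auto
    then show ?thesis using I(3) that by simp
  qed
  have psi_facts: "\<psi> bb y = 0 \<and> (\<forall>c c0'. (c has_vector_derivative c0') (at 0) \<longrightarrow> c 0 = y
        \<longrightarrow> ((\<lambda>t. \<psi> bb (c t) /\<^sub>R t) \<longlongrightarrow> 0) (at 0))" if bb: "bb \<in> Basis" for bb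
  proof -
    define j where "j = J bb"
    have j: "j < d" "bb \<in> B j" using J[OF bb] by (auto simp: j_def)
    obtain i k where ik: "i \<in> I" "k \<in> I" "i \<noteq> k" "i \<noteq> j" "k \<noteq> j"
      using two_others[OF finI I(2)] by blast
    have ikd: "i < d" "k < d" using ik I(1) by auto
    note Bs = Bsub[OF ikd(1)] Bsub[OF j(1)] Bsub[OF ikd(2)]
    note dj = Bdj[OF ikd(1) j(1) ik(4)] Bdj[OF ikd(2) j(1) ik(5)] Bdj[OF ikd(1) ikd(2) ik(3)]
    have "\<psi> bb y = 0"
      unfolding \<psi>_def j_def[symmetric] psi_expand[OF Bs dj lin[OF ikd(1)] lin[OF ikd(2)] j(2)]
      using yz[OF ik(1)] by simp
    moreover have "((\<lambda>t. \<psi> bb (c t) /\<^sub>R t) \<longlongrightarrow> 0) (at 0)"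
      if "(c has_vector_derivative c0') (at 0)" "c 0 = y" for c c0'
      unfolding \<psi>_def j_def[symmetric]
      by (rule psi_lim[OF Bs dj lin[OF ikd(1)] lin[OF ikd(2)] j(2) cphi yz[OF ik(1)] yz[OF ik(2)] that])
    ultimately show ?thesis by blast
  qed
  obtain v :: 'e where v: "v \<noteq> 0" "v \<in> tangent_cone (\<phi> ` M) 0"
    using tangent_nonzero[OF assms(8)] by blast
  have fd: "((\<lambda>x. - (v \<bullet> x)) has_derivative (\<lambda>w. - (v \<bullet> w))) (at x)" for x
    by (auto intro!: derivative_eq_intros)
  have gradf: "grad (\<lambda>x. - (v \<bullet> x)) x = - v" for x
  proof -
    have "frechet_derivative (\<lambda>x. - (v \<bullet> x)) (at x) = (\<lambda>w. - (v \<bullet> w))"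
      using frechet_derivative_at[OF fd] by simp
    then show ?thesis unfolding grad_def
      by (simp add: sum_negf euclidean_representation)
  qed
  have td: "twice_differentiable (\<lambda>x. - (v \<bullet> x))"
    unfolding twice_differentiable_def gradf using fd differentiable_def by auto
  have tc: "two_critical ((\<lambda>x. - (v \<bullet> x)) \<circ> \<phi>) M y"
    unfolding two_critical_def
  proof (intro allI impI)
    fix c :: "real \<Rightarrow> 'p" and a b :: real
    assume H: "a < 0 \<and> 0 < b \<and> smooth_on {a<..<b} c \<and> c ` {a<..<b} \<subseteq> M \<and> c 0 = y"
    have "deriv (((\<lambda>x. - (v \<bullet> x)) \<circ> \<phi>) \<circ> c) 0 = 0 \<and> deriv (deriv (((\<lambda>x. - (v \<bullet> x)) \<circ> \<phi>) \<circ> c)) 0 = 0"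
      by (rule curve_part[OF D\<phi>]) (use H psi_facts in auto)
    then show "deriv (((\<lambda>x. - (v \<bullet> x)) \<circ> \<phi>) \<circ> c) 0 = 0 \<and> 0 \<le> deriv (deriv (((\<lambda>x. - (v \<bullet> x)) \<circ> \<phi>) \<circ> c)) 0"
      by simp
  qed
  have ns: "\<not> stationary_on (\<lambda>x. - (v \<bullet> x)) (\<phi> ` M) (\<phi> y)"
    unfolding stationary_on_def assms(7) gradf using v by (metis inner_gt_zero_iff inner_minus_left neg_0_le_iff_le not_le)
  show ?thesis unfolding two_implies_one_def using td tc ns by blast
qed


end
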